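(* The following hold. (1) If $f\in\mathcal{C}^1(\mathbb{R})$ then $f^*\cdot\chi_{[-\beta,\beta]_{\mathbb{R}^*}}\in\mathfrak{U}(\mathbb{R})$. (2) If $u\in\mathfrak{U}(\mathbb{R})$ and $a,b\in\Gamma$, then $u\cdot\chi_{[a,b]_{\mathbb{R}^*}}\in\mathfrak{U}(\mathbb{R})$. (3) If $u\in\mathfrak{U}(\mathbb{R})$, then for $j=1,\dots,\ell-1$ the (internal) one-sided limits $u(\gamma_j^+)=(\lim_{x\to\gamma_j^+})^*u(x)$ and $u(\gamma_j^-)=(\lim_{x\to\gamma_j^-})^*u(x)$ are well defined. (4) If $u\in\mathfrak{U}(\mathbb{R})$, the limits $(\lim_{x\to\gamma_0^+})^*u(x)$ and $(\lim_{x\to\gamma_\ell^-})^*u(x)$ are well defined. (5) For $j=0,\dots,\ell-1$ let $V(\mathbb{I}_j)=\{u\chi_j: u\in\widetilde{\mathcal{C}^1(\mathbb{R})}\}$. Then for $j\neq k$, $V(\mathbb{I}_j)$ and $V(\mathbb{I}_k)$ are orthogonal with respect to $(u,v)=\int^*uv\,dx$. (6) $\mathfrak{U}(\mathbb{R})=\bigoplus_{j=0}^{\ell-1}V(\mathbb{I}_j)$ as an orthogonal direct sum.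
   Context: Framework (Λ-limits / nonstandard analysis): $\mathfrak{X}=\mathcal{P}_{fin}(\mathfrak{F}(\mathbb{R},\mathbb{R}))$ directed by inclusion; $\mathbb{R}^*\supset\mathbb{R}$ is a non-Archimedean ordered field of Λ-limits of nets $\mathfrak{X}\to\mathbb{R}$; internal sets/functions are Λ-limits of nets of sets/functions, $E^*$, $f^*$ natural extensions, hyperfinite sums are Λ-limits of finite sums; $\int^*$ is the natural extension of the Lebesgue integral. For $\lambda\in\mathfrak{X}$, $V_\lambda$ is the span of $\lambda$; an internal $u=\lim_{\lambda\uparrow\Lambda}u_\lambda$ is an ultrafunction if $u_\lambda\in V_\lambda$ for all $\lambda$; for a vector space $W$ of real functions, $\widetilde{W}=W^*\cap\{\text{ultrafunctions}\}$. Grid: a positive infinite $\beta\in\mathbb{R}^*$ and a hyperfinite $\Gamma=\{\gamma_0<\dots<\gamma_\ell\}\subset\mathbb{R}^*$ with $\gamma_0=-\beta$, $\gamma_\ell=\beta$, $0<\gamma_{j+1}-\gamma_j<\eta$ for a fixed infinitesimal $\eta$, and $\mathbb{R}\subseteq\Gamma$. $\mathbb{I}_j=(\gamma_j,\gamma_{j+1})_{\mathbb{R}^*}$, $\chi_j$ its characteristic function ($j=0,\dots,\ell-1$). For $a,b\in\Gamma$, $\chi_{[a,b]_{\mathbb{R}^*}}(x)$ equals $1$ for $x\in(a,b)$, $0$ for $x\notin[a,b]$, $\tfrac12$ for $x=a\neq-\beta$ or $x=b\neq\beta$, and $1$ for $x=a=-\beta$ or $x=b=\beta$. $\mathfrak{U}(\mathbb{R})$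 is the set of $u:[-\beta,\beta]\to\mathbb{R}^*$ representable as an internal hyperfinite sum $u=\sum_{j=0}^{\ell-1}v_j\chi_j$ with $v_j\in\widetilde{\mathcal{C}^1(\mathbb{R})}$. *)

theory Defs
  imports "HOL-Analysis.Analysis"
begin

text \<open>Lambda-theory modelled at the level of nets indexed by
 \<open>\<lambda> \<in> P_fin(F(R,R))\<close>, modulo a fine ultrafilter U (the Lambda-limit
 identifies nets which agree U-eventually).  An element of R* is represented
 by a net idx => real, an internal function by a net idx => real => real,
 a hyperfinite index by a natural number inside the eventually-quantifier.\<close>

type_synonym idx = "(real \<Rightarrow> real) set"

definition fine_ultrafilter :: "idx filter \<Rightarrow> bool" where
  "fine_ultrafilter U \<longleftrightarrow> U \<noteq> bot
     \<and> (\<forall>P. eventually P U \<or> eventually (\<lambda>l. \<not> P l) U)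
     \<and> eventually finite U
     \<and> (\<forall>f. eventually (\<lambda>l. f \<in> l) U)"

definition C1 :: "(real \<Rightarrow> real) set" where
  "C1 = {f. \<exists>f'. (\<forall>x. (f has_real_derivative f' x) (at x)) \<and> continuous_on UNIV f'}"

definition Vspan :: "idx \<Rightarrow> (real \<Rightarrow> real) set" where
  "Vspan l = {g. \<exists>c. g = (\<lambda>x. \<Sum>h\<in>l. c h * h x)}"

text \<open>the internal set  \<open>\<widetilde>{C^1(R)}\<close> = C^1(R)^* \<inter> ultrafunctions\<close>
definition ultraC1 :: "idx filter \<Rightarrow> (idx \<Rightarrow> real \<Rightarrow> real) \<Rightarrow> bool" where
  "ultraC1 U u \<longleftrightarrow> eventually (\<lambda>l. u l \<in> Vspan l \<and> u l \<in> C1) U"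

text \<open>The grid: beta positive infinite, eta positive infinitesimal,
 Gamma = {gamma_0 < ... < gamma_ell} hyperfinite, gamma_0 = -beta, gamma_ell = beta,
 mesh < eta, and R \<subseteq> Gamma.\<close>
definition grid :: "idx filter \<Rightarrow> (idx \<Rightarrow> real) \<Rightarrow> (idx \<Rightarrow> real) \<Rightarrow> (idx \<Rightarrow> nat)
     \<Rightarrow> (idx \<Rightarrow> nat \<Rightarrow> real) \<Rightarrow> bool" where
  "grid U \<beta> \<eta> ell \<gamma> \<longleftrightarrow>
     (\<forall>M::real. eventually (\<lambda>l. \<beta> l > M) U)
   \<and> eventually (\<lambda>l. \<eta> l > 0) U
   \<and> (\<forall>e::real. e > 0 \<longrightarrow> eventually (\<lambda>l. \<eta> l < e) U)
   \<and> eventually (\<lambda>l. \<gamma> l 0 = - \<beta> l \<and> \<gamma> l (ell l) = \<beta> l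
        \<and> (\<forall>j < ell l. 0 < \<gamma> l (Suc j) - \<gamma> l j \<and> \<gamma> l (Suc j) - \<gamma> l j < \<eta> l)) U
   \<and> (\<forall>r::real. eventually (\<lambda>l. r \<in> \<gamma> l ` {0..ell l}) U)"

definition in_grid :: "idx filter \<Rightarrow> (idx \<Rightarrow> nat) \<Rightarrow> (idx \<Rightarrow> nat \<Rightarrow> real) \<Rightarrow> (idx \<Rightarrow> real) \<Rightarrow> bool" where
  "in_grid U ell \<gamma> a \<longleftrightarrow> eventually (\<lambda>l. a l \<in> \<gamma> l ` {0..ell l}) U"

definition chi :: "(nat \<Rightarrow> real) \<Rightarrow> nat \<Rightarrow> real \<Rightarrow> real" where
  "chi g j x = (if g j < x \<and> x < g (Suc j) then 1 else 0)"

definition chi_ab :: "real \<Rightarrow> real \<Rightarrow> real \<Rightarrow> real \<Rightarrow> real" where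
  "chi_ab \<beta> a b x =
     (if a < x \<and> x < b then 1
      else if x \<notin> {a..b} then 0
      else if (x = a \<and> a = - \<beta>) \<or> (x = b \<and> b = \<beta>) then 1
      else 1/2)"

definition offgrid :: "real \<Rightarrow> nat \<Rightarrow> (nat \<Rightarrow> real) \<Rightarrow> real set" where
  "offgrid \<beta> n g = {-\<beta>..\<beta>} - g ` {0..n}"

text \<open>u \<in> U(R): u = sum_{j<ell} v_j chi_j with (v_j) an internal family in
 \<open>\<widetilde>{C^1(R)}\<close>; the representation is required on [-beta,beta] off the grid.\<close>
definition inUR :: "idx filter \<Rightarrow> (idx \<Rightarrow> real) \<Rightarrow> (idx \<Rightarrow> nat) \<Rightarrow> (idx \<Rightarrow> nat \<Rightarrow> real)
     \<Rightarrow> (idx \<Rightarrow> real \<Rightarrow> real) \<Rightarrow> bool" where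
  "inUR U \<beta> ell \<gamma> u \<longleftrightarrow> eventually (\<lambda>l. \<exists>v :: nat \<Rightarrow> real \<Rightarrow> real.
      (\<forall>j < ell l. v j \<in> Vspan l \<and> v j \<in> C1)
    \<and> (\<forall>x \<in> offgrid (\<beta> l) (ell l) (\<gamma> l). u l x = (\<Sum>j<ell l. v j x * chi (\<gamma> l) j x))) U"

definition VI :: "idx \<Rightarrow> (nat \<Rightarrow> real) \<Rightarrow> nat \<Rightarrow> (real \<Rightarrow> real) set" where
  "VI l g j = {(\<lambda>x. v x * chi g j x) | v. v \<in> Vspan l \<and> v \<in> C1}"

text \<open>(u,v) = integral of u v (levelwise; the internal one is its Lambda-limit)\<close>
definition hinner :: "(real \<Rightarrow> real) \<Rightarrow> (real \<Rightarrow> real) \<Rightarrow> real" where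
  "hinner f g = (LINT x|lborel. f x * g x)"

end

theory Submission
  imports Defs
begin




lemma g_mono:
  assumes st: "\<forall>j<n. g j < g (Suc j)" and "k \<le> n"
  shows "i < k \<Longrightarrow> (g i :: real) < g k"
  using assms(2)
proof (induction k)
  case 0 then show ?case by simp
next
  case (Suc k)
  have s: "g k < g (Suc k)" using st Suc.prems by auto
  show ?case
  proof (cases "i = k")
    case True then show ?thesis using s by simp
  next
    case False then have "i < k" using Suc.prems by simp
    then show ?thesis using Suc.IH Suc.prems s by simp
  qed
qed

lemma g_le:
  assumes st: "\<forall>j<n. g j < g (Suc j)" and "i \<le> k" "k \<le> n"
  shows "(g i :: real) \<le> g k"
  using g_mono[OF st assms(3), of i] assms(2) by (cases "i = k") auto

lemma grid_not_in:
  assumes st: "\<forall>j<n. g j < g (Suc j)" and "i \<le> n" "j < n"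
  shows "g i \<le> (g j :: real) \<or> g (Suc j) \<le> g i"
proof (cases "i \<le> j")
  case True then show ?thesis using g_le[OF st, of i j] assms by auto
next
  case False then show ?thesis using g_le[OF st, of "Suc j" i] assms by auto
qed

lemma in_offgrid:
  assumes st: "\<forall>j<n. g j < g (Suc j)" and g0: "g 0 = -b" and gn: "g n = b"
    and j: "j < n" and x: "g j < x" "x < g (Suc j)"
  shows "x \<in> offgrid b n g"
proof -
  have "g 0 \<le> g j" using g_le[OF st, of 0 j] j by auto
  moreover have "g (Suc j) \<le> g n" using g_le[OF st, of "Suc j" n] j by auto
  moreover have "x \<notin> g ` {0..n}"
  proof
    assume "x \<in> g ` {0..n}"
    then obtain i where "i \<le> n" "x = g i" by auto
    then show False using grid_not_in[OF st, of i j] j x by auto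
  qed
  ultimately show ?thesis using x g0 gn unfolding offgrid_def by auto
qed

lemma find_interval:
  "(g 0 :: real) \<le> x \<Longrightarrow> x \<le> g n \<Longrightarrow> x \<notin> g ` {0..n} \<Longrightarrow> \<exists>j<n. g j < x \<and> x < g (Suc j)"
proof (induction n)
  case 0 then show ?case by (auto simp: image_iff)
next
  case (Suc n)
  show ?case
  proof (cases "x \<le> g n")
    case True
    have "x \<notin> g ` {0..n}" using Suc.prems by auto
    then show ?thesis using Suc.IH Suc.prems True by (meson less_SucI)
  next
    case False
    have "x \<noteq> g (Suc n)" using Suc.prems by auto
    then show ?thesis using False Suc.prems by (intro exI[of _ n]) auto
  qed
qed

lemma offgrid_interval:
  assumes g0: "g 0 = -b" and gn: "g n = b" and x: "x \<in> offgrid b n g"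
  shows "\<exists>j<n. g j < x \<and> x < g (Suc j)"
  using x find_interval[of g x n] g0 gn unfolding offgrid_def by auto

lemma chi_disj:
  assumes st: "\<forall>j<n. g j < g (Suc j)" and "j < n" "k < n" "j \<noteq> k"
  shows "chi g j x * chi g k x = 0"
proof (cases "j < k")
  case True
  then have "g (Suc j) \<le> g k" using g_le[OF st, of "Suc j" k] assms by auto
  then show ?thesis unfolding chi_def by auto
next
  case False
  then have "g (Suc k) \<le> g j" using g_le[OF st, of "Suc k" j] assms by auto
  then show ?thesis unfolding chi_def by auto
qed

lemma sum_single:
  assumes st: "\<forall>j<n. g j < g (Suc j)" and j: "j < n" and x: "g j < x" "x < g (Suc j)"
  shows "(\<Sum>i<n. f i x * chi g i x) = f j x"
proof -
  have "(\<Sum>i<n. f i x * chi g i x) = (\<Sum>i\<in>{j}. f i x * chi g i x)"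
  proof (rule sum.mono_neutral_right)
    show "\<forall>i\<in>{..<n} - {j}. f i x * chi g i x = 0"
    proof
      fix i assume i: "i \<in> {..<n} - {j}"
      have "chi g i x * chi g j x = 0" using chi_disj[OF st, of i j x] i j by auto
      moreover have "chi g j x = 1" using x unfolding chi_def by auto
      ultimately show "f i x * chi g i x = 0" by simp
    qed
  qed (use j in auto)
  also have "\<dots> = f j x" using x by (simp add: chi_def)
  finally show ?thesis .
qed

lemma C1_isCont: "f \<in> C1 \<Longrightarrow> isCont f x"
  unfolding C1_def using DERIV_isCont by blast

lemma lim_interval:
  assumes st: "\<forall>j<n. g j < g (Suc j)" and g0: "g 0 = -b" and gn: "g n = b"
    and j: "j < n" and v: "\<forall>i<n. v i \<in> C1"
    and u: "\<forall>x \<in> offgrid b n g. u x = (\<Sum>i<n. v i x * chi g i x)"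
  shows "(u \<longlongrightarrow> v j (g j)) (at_right (g j))" "(u \<longlongrightarrow> v j (g (Suc j))) (at_left (g (Suc j)))"
proof -
  have eq: "u x = v j x" if "x \<in> {g j<..<g (Suc j)}" for x
    using u in_offgrid[OF st g0 gn j, of x] sum_single[OF st j, of x v] that by auto
  have lt: "g j < g (Suc j)" using st j by auto
  have c: "isCont (v j) y" for y using C1_isCont v j by auto
  show "(u \<longlongrightarrow> v j (g j)) (at_right (g j))"
  proof (rule Lim_transform_eventually)
    show "(v j \<longlongrightarrow> v j (g j)) (at_right (g j))"
      using c[of "g j"] unfolding isCont_def by (rule tendsto_mono[OF at_within_le_at])
    show "\<forall>\<^sub>F x in at_right (g j). v j x = u x"
      using eventually_at_right_real[OF lt] by eventually_elim (use eq in auto)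
  qed
  show "(u \<longlongrightarrow> v j (g (Suc j))) (at_left (g (Suc j)))"
  proof (rule Lim_transform_eventually)
    show "(v j \<longlongrightarrow> v j (g (Suc j))) (at_left (g (Suc j)))"
      using c[of "g (Suc j)"] unfolding isCont_def by (rule tendsto_mono[OF at_within_le_at])
    show "\<forall>\<^sub>F x in at_left (g (Suc j)). v j x = u x"
      using eventually_at_left_real[OF lt] by eventually_elim (use eq in auto)
  qed
qed

lemma zero_Vspan: "(\<lambda>x. 0) \<in> Vspan l"
  unfolding Vspan_def by (rule CollectI, rule exI[of _ "\<lambda>h. 0"]) simp

lemma zero_C1: "(\<lambda>x. 0) \<in> C1"
  unfolding C1_def by (rule CollectI, rule exI[of _ "\<lambda>x. 0"]) auto

lemma mem_Vspan:
  assumes "finite l" "f \<in> l" shows "f \<in> Vspan l"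
proof -
  have "(\<Sum>h\<in>l. (if h = f then 1 else 0) * h x) = f x" for x
  proof -
    have "(\<Sum>h\<in>l. (if h = f then 1 else 0) * h x) = (\<Sum>h\<in>l. if h = f then f x else 0)"
      by (rule sum.cong) auto
    also have "\<dots> = f x" using assms by simp
    finally show ?thesis .
  qed
  then show ?thesis unfolding Vspan_def by (intro CollectI exI[of _ "\<lambda>h. if h = f then 1 else 0"]) auto
qed

definition "GP \<beta> ell \<gamma> l \<longleftrightarrow> \<gamma> l 0 = - \<beta> l \<and> \<gamma> l (ell l) = \<beta> l \<and> (\<forall>j < ell l. \<gamma> l j < \<gamma> l (Suc j))"

lemma grid_GP: "grid U \<beta> \<eta> ell \<gamma> \<Longrightarrow> eventually (GP \<beta> ell \<gamma>) U"
proof -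
  assume "grid U \<beta> \<eta> ell \<gamma>"
  then have "eventually (\<lambda>l. \<gamma> l 0 = - \<beta> l \<and> \<gamma> l (ell l) = \<beta> l
        \<and> (\<forall>j < ell l. 0 < \<gamma> l (Suc j) - \<gamma> l j \<and> \<gamma> l (Suc j) - \<gamma> l j < \<eta> l)) U"
    unfolding grid_def by blast
  then show ?thesis by eventually_elim (auto simp: GP_def)
qed

lemma grid_pos: "grid U \<beta> \<eta> ell \<gamma> \<Longrightarrow> eventually (\<lambda>l. \<beta> l > 0) U"
  unfolding grid_def by auto

lemma part1:
  assumes F: "fine_ultrafilter U" and G: "grid U \<beta> \<eta> ell \<gamma>" and f: "f \<in> C1"
  shows "inUR U \<beta> ell \<gamma> (\<lambda>l x. f x * chi_ab (\<beta> l) (- \<beta> l) (\<beta> l) x)"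
proof -
  have "eventually (\<lambda>l. finite l \<and> f \<in> l \<and> GP \<beta> ell \<gamma> l) U"
    using F grid_GP[OF G] unfolding fine_ultrafilter_def by (intro eventually_conj) auto
  then show ?thesis unfolding inUR_def
  proof eventually_elim
    case (elim l)
    then have st: "\<forall>j<ell l. \<gamma> l j < \<gamma> l (Suc j)" and g0: "\<gamma> l 0 = - \<beta> l"
      and gn: "\<gamma> l (ell l) = \<beta> l" by (auto simp: GP_def)
    show ?case
    proof (intro exI[of _ "\<lambda>j. f"] conjI ballI allI impI)
      show "f \<in> Vspan l" using elim mem_Vspan by auto
      show "f \<in> C1" by (rule f)
    next
      fix x assume x: "x \<in> offgrid (\<beta> l) (ell l) (\<gamma> l)"
      obtain j where j: "j < ell l" "\<gamma> l j < x" "x < \<gamma> l (Suc j)"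
        using offgrid_interval[OF g0 gn x] by auto
      have "- \<beta> l < x" "x < \<beta> l"
        using x g0 gn unfolding offgrid_def
        by (auto, metis atLeastAtMost_iff image_eqI le0 le_less order.refl)+
      then have "chi_ab (\<beta> l) (- \<beta> l) (\<beta> l) x = 1" by (simp add: chi_ab_def)
      then show "f x * chi_ab (\<beta> l) (- \<beta> l) (\<beta> l) x = (\<Sum>j<ell l. f x * chi (\<gamma> l) j x)"
        using sum_single[OF st j, of "\<lambda>i. f"] by simp
    qed
  qed
qed

lemma side:
  assumes st: "\<forall>j<n. g j < g (Suc j)" and i: "i \<le> n" and j: "j < n"
    and x: "g j < x" "x < g (Suc j)" and y: "g j < y" "y < g (Suc j)"
  shows "(g i < x \<longleftrightarrow> g i < (y::real)) \<and> (x < g i \<longleftrightarrow> y < g i)"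
  using grid_not_in[OF st i j] x y by auto

lemma part2:
  assumes G: "grid U \<beta> \<eta> ell \<gamma>" and u: "inUR U \<beta> ell \<gamma> u"
    and a: "in_grid U ell \<gamma> a" and b: "in_grid U ell \<gamma> b"
  shows "inUR U \<beta> ell \<gamma> (\<lambda>l x. u l x * chi_ab (\<beta> l) (a l) (b l) x)"
proof -
  have "eventually (\<lambda>l. GP \<beta> ell \<gamma> l \<and> a l \<in> \<gamma> l ` {0..ell l} \<and> b l \<in> \<gamma> l ` {0..ell l}
     \<and> (\<exists>v :: nat \<Rightarrow> real \<Rightarrow> real.
      (\<forall>j < ell l. v j \<in> Vspan l \<and> v j \<in> C1)
    \<and> (\<forall>x \<in> offgrid (\<beta> l) (ell l) (\<gamma> l). u l x = (\<Sum>j<ell l. v j x * chi (\<gamma> l) j x)))) U"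
    using grid_GP[OF G] a b u unfolding in_grid_def inUR_def
    by (intro eventually_conj) auto
  then show ?thesis unfolding inUR_def
  proof eventually_elim
    case (elim l)
    then have st: "\<forall>j<ell l. \<gamma> l j < \<gamma> l (Suc j)" and g0: "\<gamma> l 0 = - \<beta> l"
      and gn: "\<gamma> l (ell l) = \<beta> l" by (auto simp: GP_def)
    obtain ia where ia: "ia \<le> ell l" "a l = \<gamma> l ia" using elim by auto
    obtain ib where ib: "ib \<le> ell l" "b l = \<gamma> l ib" using elim by auto
    obtain v where v: "\<forall>j < ell l. v j \<in> Vspan l \<and> v j \<in> C1"
      "\<forall>x \<in> offgrid (\<beta> l) (ell l) (\<gamma> l). u l x = (\<Sum>j<ell l. v j x * chi (\<gamma> l) j x)"
      using elim by blast
    define m where "m j = (\<gamma> l j + \<gamma> l (Suc j)) / 2" for j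
    define v' where "v' j = (if a l < m j \<and> m j < b l then v j else (\<lambda>x. 0))" for j
    show ?case
    proof (intro exI[of _ v'] conjI ballI allI impI)
      fix j assume "j < ell l"
      then show "v' j \<in> Vspan l" "v' j \<in> C1" using v zero_Vspan zero_C1 by (auto simp: v'_def)
    next
      fix x assume x: "x \<in> offgrid (\<beta> l) (ell l) (\<gamma> l)"
      have xa: "x \<noteq> a l" "x \<noteq> b l" using x ia ib unfolding offgrid_def by auto
      then have cab: "chi_ab (\<beta> l) (a l) (b l) x = (if a l < x \<and> x < b l then 1 else 0)"
        unfolding chi_ab_def by auto
      have "u l x * chi_ab (\<beta> l) (a l) (b l) x = (\<Sum>j<ell l. v j x * chi (\<gamma> l) j x * chi_ab (\<beta> l) (a l) (b l) x)"
        using v(2) x by (simp add: sum_distrib_right)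
      also have "\<dots> = (\<Sum>j<ell l. v' j x * chi (\<gamma> l) j x)"
      proof (rule sum.cong)
        fix j assume j: "j \<in> {..<ell l}"
        show "v j x * chi (\<gamma> l) j x * chi_ab (\<beta> l) (a l) (b l) x = v' j x * chi (\<gamma> l) j x"
        proof (cases "\<gamma> l j < x \<and> x < \<gamma> l (Suc j)")
          case True
          have lt: "\<gamma> l j < \<gamma> l (Suc j)" using st j by auto
          have mm: "\<gamma> l j < m j" "m j < \<gamma> l (Suc j)" using lt by (auto simp: m_def)
          have "(a l < x \<longleftrightarrow> a l < m j)" using side[OF st ia(1), of j x "m j"] True mm j ia by auto
          moreover have "(x < b l \<longleftrightarrow> m j < b l)" using side[OF st ib(1), of j x "m j"] True mm j ib by auto
          ultimately show ?thesis using True cab by (auto simp: v'_def chi_def)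
        next
          case False then show ?thesis unfolding chi_def by auto
        qed
      qed simp
      finally show "u l x * chi_ab (\<beta> l) (a l) (b l) x = (\<Sum>j<ell l. v' j x * chi (\<gamma> l) j x)" .
    qed
  qed
qed

lemma part34:
  assumes G: "grid U \<beta> \<eta> ell \<gamma>" and u: "inUR U \<beta> ell \<gamma> u"
  shows "eventually (\<lambda>l. \<forall>j. 1 \<le> j \<and> j \<le> ell l - 1 \<longrightarrow>
        (\<exists>L. (u l \<longlongrightarrow> L) (at_right (\<gamma> l j))) \<and> (\<exists>L. (u l \<longlongrightarrow> L) (at_left (\<gamma> l j)))) U
    \<and> eventually (\<lambda>l.
        (\<exists>L. (u l \<longlongrightarrow> L) (at_right (\<gamma> l 0))) \<and> (\<exists>L. (u l \<longlongrightarrow> L) (at_left (\<gamma> l (ell l))))) U"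
proof -
  have E: "eventually (\<lambda>l. GP \<beta> ell \<gamma> l \<and> \<beta> l > 0
     \<and> (\<exists>v :: nat \<Rightarrow> real \<Rightarrow> real.
      (\<forall>j < ell l. v j \<in> Vspan l \<and> v j \<in> C1)
    \<and> (\<forall>x \<in> offgrid (\<beta> l) (ell l) (\<gamma> l). u l x = (\<Sum>j<ell l. v j x * chi (\<gamma> l) j x)))) U"
    using grid_GP[OF G] grid_pos[OF G] u unfolding inUR_def
    by (intro eventually_conj) auto
  have L: "(\<exists>L. (u l \<longlongrightarrow> L) (at_right (\<gamma> l j))) \<and> (\<exists>L. (u l \<longlongrightarrow> L) (at_left (\<gamma> l (Suc j))))"
    if el: "GP \<beta> ell \<gamma> l \<and> \<beta> l > 0
     \<and> (\<exists>v :: nat \<Rightarrow> real \<Rightarrow> real.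
      (\<forall>j < ell l. v j \<in> Vspan l \<and> v j \<in> C1)
    \<and> (\<forall>x \<in> offgrid (\<beta> l) (ell l) (\<gamma> l). u l x = (\<Sum>j<ell l. v j x * chi (\<gamma> l) j x)))"
      and j: "j < ell l" for l j
  proof -
    have st: "\<forall>j<ell l. \<gamma> l j < \<gamma> l (Suc j)" and g0: "\<gamma> l 0 = - \<beta> l"
      and gn: "\<gamma> l (ell l) = \<beta> l" using el by (auto simp: GP_def)
    obtain v where v: "\<forall>j < ell l. v j \<in> Vspan l \<and> v j \<in> C1"
      "\<forall>x \<in> offgrid (\<beta> l) (ell l) (\<gamma> l). u l x = (\<Sum>j<ell l. v j x * chi (\<gamma> l) j x)"
      using el by blast
    have vc: "\<forall>i<ell l. v i \<in> C1" using v by auto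
    show ?thesis using lim_interval[OF st g0 gn j vc v(2)] by blast
  qed
  have pos: "ell l > 0" if "GP \<beta> ell \<gamma> l" "\<beta> l > 0" for l
    using that by (cases "ell l") (auto simp: GP_def)
  show ?thesis
  proof
    show "eventually (\<lambda>l. \<forall>j. 1 \<le> j \<and> j \<le> ell l - 1 \<longrightarrow>
        (\<exists>L. (u l \<longlongrightarrow> L) (at_right (\<gamma> l j))) \<and> (\<exists>L. (u l \<longlongrightarrow> L) (at_left (\<gamma> l j)))) U"
      using E
    proof eventually_elim
      case (elim l)
      show ?case
      proof (intro allI impI)
        fix j assume j: "1 \<le> j \<and> j \<le> ell l - 1"
        have "j < ell l" "j - 1 < ell l" using j by auto
        moreover have "Suc (j - 1) = j" using j by auto
        ultimately show "(\<exists>L. (u l \<longlongrightarrow> L) (at_right (\<gamma> l j))) \<and> (\<exists>L. (u l \<longlongrightarrow> L) (at_left (\<gamma> l j)))"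
          using L[OF elim, of j] L[OF elim, of "j - 1"] by metis
      qed
    qed
    show "eventually (\<lambda>l.
        (\<exists>L. (u l \<longlongrightarrow> L) (at_right (\<gamma> l 0))) \<and> (\<exists>L. (u l \<longlongrightarrow> L) (at_left (\<gamma> l (ell l))))) U"
      using E
    proof eventually_elim
      case (elim l)
      have p: "ell l > 0" using pos elim by auto
      then have "Suc (ell l - 1) = ell l" by simp
      then show ?case using L[OF elim, of 0] L[OF elim, of "ell l - 1"] p by (metis diff_less zero_less_one)
    qed
  qed
qed

lemma part5:
  assumes G: "grid U \<beta> \<eta> ell \<gamma>"
  shows "eventually (\<lambda>l. \<forall>j < ell l. \<forall>k < ell l. j \<noteq> k \<longrightarrow>
        hinner (\<lambda>x. u l x * chi (\<gamma> l) j x) (\<lambda>x. v l x * chi (\<gamma> l) k x) = 0) U"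
  using grid_GP[OF G]
proof eventually_elim
  case (elim l)
  then have st: "\<forall>j<ell l. \<gamma> l j < \<gamma> l (Suc j)" by (auto simp: GP_def)
  show ?case
  proof (intro allI impI)
    fix j k assume "j < ell l" "k < ell l" "j \<noteq> k"
    then have "(\<lambda>x. u l x * chi (\<gamma> l) j x * (v l x * chi (\<gamma> l) k x)) = (\<lambda>x. 0)"
      using chi_disj[OF st] by (intro ext) (metis mult.commute mult.left_commute mult_zero_left)
    then show "hinner (\<lambda>x. u l x * chi (\<gamma> l) j x) (\<lambda>x. v l x * chi (\<gamma> l) k x) = 0"
      unfolding hinner_def by simp
  qed
qed

lemma part6:
  "inUR U \<beta> ell \<gamma> u \<longleftrightarrow> (\<exists>w :: idx \<Rightarrow> nat \<Rightarrow> real \<Rightarrow> real. eventually (\<lambda>l.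
        (\<forall>j < ell l. w l j \<in> VI l (\<gamma> l) j)
      \<and> (\<forall>x \<in> offgrid (\<beta> l) (ell l) (\<gamma> l). u l x = (\<Sum>j<ell l. w l j x))) U)"
proof
  assume "inUR U \<beta> ell \<gamma> u"
  then have E: "eventually (\<lambda>l. \<exists>v :: nat \<Rightarrow> real \<Rightarrow> real.
      (\<forall>j < ell l. v j \<in> Vspan l \<and> v j \<in> C1)
    \<and> (\<forall>x \<in> offgrid (\<beta> l) (ell l) (\<gamma> l). u l x = (\<Sum>j<ell l. v j x * chi (\<gamma> l) j x))) U"
    unfolding inUR_def .
  define Q where "Q l v \<longleftrightarrow> (\<forall>j < ell l. v j \<in> Vspan l \<and> v j \<in> C1)
    \<and> (\<forall>x \<in> offgrid (\<beta> l) (ell l) (\<gamma> l). u l x = (\<Sum>j<ell l. v j x * chi (\<gamma> l) j x))" for l v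
  define V where "V l = (SOME v. Q l v)" for l
  have "eventually (\<lambda>l. Q l (V l)) U"
    using E unfolding V_def Q_def[symmetric] by (rule eventually_mono) (metis someI_ex)
  then show "\<exists>w. eventually (\<lambda>l.
        (\<forall>j < ell l. w l j \<in> VI l (\<gamma> l) j)
      \<and> (\<forall>x \<in> offgrid (\<beta> l) (ell l) (\<gamma> l). u l x = (\<Sum>j<ell l. w l j x))) U"
  proof (intro exI[of _ "\<lambda>l j x. V l j x * chi (\<gamma> l) j x"], elim eventually_mono, intro conjI allI impI ballI)
    fix l j assume h: "Q l (V l)" and j: "j < ell l"
    then show "(\<lambda>x. V l j x * chi (\<gamma> l) j x) \<in> VI l (\<gamma> l) j"
      unfolding VI_def Q_def by blast
  next
    fix l x assume h: "Q l (V l)" and x: "x \<in> offgrid (\<beta> l) (ell l) (\<gamma> l)"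
    then show "u l x = (\<Sum>j<ell l. V l j x * chi (\<gamma> l) j x)" unfolding Q_def by blast
  qed
next
  assume "\<exists>w. eventually (\<lambda>l.
        (\<forall>j < ell l. w l j \<in> VI l (\<gamma> l) j)
      \<and> (\<forall>x \<in> offgrid (\<beta> l) (ell l) (\<gamma> l). u l x = (\<Sum>j<ell l. w l j x))) U"
  then obtain w where w: "eventually (\<lambda>l.
        (\<forall>j < ell l. w l j \<in> VI l (\<gamma> l) j)
      \<and> (\<forall>x \<in> offgrid (\<beta> l) (ell l) (\<gamma> l). u l x = (\<Sum>j<ell l. w l j x))) U" by blast
  show "inUR U \<beta> ell \<gamma> u" unfolding inUR_def using w
  proof eventually_elim
    case (elim l)
    have "\<forall>j. \<exists>v. j < ell l \<longrightarrow> v \<in> Vspan l \<and> v \<in> C1 \<and> w l j = (\<lambda>x. v x * chi (\<gamma> l) j x)"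
      using elim by (auto simp: VI_def)
    then obtain v where v: "\<And>j. j < ell l \<Longrightarrow> v j \<in> Vspan l \<and> v j \<in> C1 \<and> w l j = (\<lambda>x. v j x * chi (\<gamma> l) j x)"
      by metis
    show ?case
    proof (intro exI[of _ v] conjI allI impI ballI)
      fix x assume "x \<in> offgrid (\<beta> l) (ell l) (\<gamma> l)"
      then have "u l x = (\<Sum>j<ell l. w l j x)" using elim by auto
      also have "\<dots> = (\<Sum>j<ell l. v j x * chi (\<gamma> l) j x)" using v by (intro sum.cong) auto
      finally show "u l x = (\<Sum>j<ell l. v j x * chi (\<gamma> l) j x)" .
    qed (use v in auto)
  qed
qed

lemma part7:
  assumes G: "grid U \<beta> \<eta> ell \<gamma>"
    and H: "eventually (\<lambda>l.
        (\<forall>j < ell l. w l j \<in> VI l (\<gamma> l) j \<and> w' l j \<in> VI l (\<gamma> l) j)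
      \<and> (\<forall>x \<in> offgrid (\<beta> l) (ell l) (\<gamma> l). (\<Sum>j<ell l. w l j x) = (\<Sum>j<ell l. w' l j x))) U"
  shows "eventually (\<lambda>l. \<forall>j < ell l. w l j = w' l j) U"
  using H grid_GP[OF G]
proof eventually_elim
  case (elim l)
  then have st: "\<forall>j<ell l. \<gamma> l j < \<gamma> l (Suc j)" and g0: "\<gamma> l 0 = - \<beta> l"
    and gn: "\<gamma> l (ell l) = \<beta> l" by (auto simp: GP_def)
  have "\<forall>j. \<exists>v. j < ell l \<longrightarrow> w l j = (\<lambda>x. v x * chi (\<gamma> l) j x)"
    using elim by (auto simp: VI_def)
  then obtain v where v: "\<And>j. j < ell l \<Longrightarrow> w l j = (\<lambda>x. v j x * chi (\<gamma> l) j x)" by metis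
  have "\<forall>j. \<exists>v. j < ell l \<longrightarrow> w' l j = (\<lambda>x. v x * chi (\<gamma> l) j x)"
    using elim by (auto simp: VI_def)
  then obtain v' where v': "\<And>j. j < ell l \<Longrightarrow> w' l j = (\<lambda>x. v' j x * chi (\<gamma> l) j x)" by metis
  show ?case
  proof (intro allI impI ext)
    fix j x assume j: "j < ell l"
    show "w l j x = w' l j x"
    proof (cases "\<gamma> l j < x \<and> x < \<gamma> l (Suc j)")
      case True
      then have off: "x \<in> offgrid (\<beta> l) (ell l) (\<gamma> l)" using in_offgrid[OF st g0 gn j] by auto
      have "(\<Sum>i<ell l. w l i x) = (\<Sum>i<ell l. v i x * chi (\<gamma> l) i x)" using v by (intro sum.cong) auto
      also have "\<dots> = v j x" using sum_single[OF st j, of x v] True by simp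
      finally have 1: "(\<Sum>i<ell l. w l i x) = v j x" .
      have "(\<Sum>i<ell l. w' l i x) = (\<Sum>i<ell l. v' i x * chi (\<gamma> l) i x)" using v' by (intro sum.cong) auto
      also have "\<dots> = v' j x" using sum_single[OF st j, of x v'] True by simp
      finally have 2: "(\<Sum>i<ell l. w' l i x) = v' j x" .
      have "v j x = v' j x" using 1 2 elim off by auto
      then show ?thesis using v[OF j] v'[OF j] by simp
    next
      case False then show ?thesis using v[OF j] v'[OF j] unfolding chi_def by auto
    qed
  qed
qed

theorem mainTheorem3:
  fixes U :: "idx filter" and \<beta> \<eta> :: "idx \<Rightarrow> real" and ell :: "idx \<Rightarrow> nat"
    and \<gamma> :: "idx \<Rightarrow> nat \<Rightarrow> real"
  assumes "fine_ultrafilter U" and "grid U \<beta> \<eta> ell \<gamma>"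
  shows
   "(\<forall>f \<in> C1. inUR U \<beta> ell \<gamma> (\<lambda>l x. f x * chi_ab (\<beta> l) (- \<beta> l) (\<beta> l) x))
  \<and> (\<forall>u a b. inUR U \<beta> ell \<gamma> u \<and> in_grid U ell \<gamma> a \<and> in_grid U ell \<gamma> b \<longrightarrow>
        inUR U \<beta> ell \<gamma> (\<lambda>l x. u l x * chi_ab (\<beta> l) (a l) (b l) x))
  \<and> (\<forall>u. inUR U \<beta> ell \<gamma> u \<longrightarrow> eventually (\<lambda>l. \<forall>j. 1 \<le> j \<and> j \<le> ell l - 1 \<longrightarrow>
        (\<exists>L. (u l \<longlongrightarrow> L) (at_right (\<gamma> l j))) \<and> (\<exists>L. (u l \<longlongrightarrow> L) (at_left (\<gamma> l j)))) U)
  \<and> (\<forall>u. inUR U \<beta> ell \<gamma> u \<longrightarrow> eventually (\<lambda>l.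
        (\<exists>L. (u l \<longlongrightarrow> L) (at_right (\<gamma> l 0))) \<and> (\<exists>L. (u l \<longlongrightarrow> L) (at_left (\<gamma> l (ell l))))) U)
  \<and> (\<forall>u v. ultraC1 U u \<and> ultraC1 U v \<longrightarrow> eventually (\<lambda>l. \<forall>j < ell l. \<forall>k < ell l. j \<noteq> k \<longrightarrow>
        hinner (\<lambda>x. u l x * chi (\<gamma> l) j x) (\<lambda>x. v l x * chi (\<gamma> l) k x) = 0) U)
  \<and> (\<forall>u. inUR U \<beta> ell \<gamma> u \<longleftrightarrow> (\<exists>w :: idx \<Rightarrow> nat \<Rightarrow> real \<Rightarrow> real. eventually (\<lambda>l.
        (\<forall>j < ell l. w l j \<in> VI l (\<gamma> l) j)
      \<and> (\<forall>x \<in> offgrid (\<beta> l) (ell l) (\<gamma> l). u l x = (\<Sum>j<ell l. w l j x))) U))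
  \<and> (\<forall>w w' :: idx \<Rightarrow> nat \<Rightarrow> real \<Rightarrow> real. eventually (\<lambda>l.
        (\<forall>j < ell l. w l j \<in> VI l (\<gamma> l) j \<and> w' l j \<in> VI l (\<gamma> l) j)
      \<and> (\<forall>x \<in> offgrid (\<beta> l) (ell l) (\<gamma> l). (\<Sum>j<ell l. w l j x) = (\<Sum>j<ell l. w' l j x))) U
      \<longrightarrow> eventually (\<lambda>l. \<forall>j < ell l. w l j = w' l j) U)"
proof -
  note F = assms(1) and G = assms(2)
  show ?thesis
    using part1[OF F G] part2[OF G] part34[OF G] part5[OF G] part6 part7[OF G]
    by blast
qed

end
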